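(* Let $k \ge 2$ and $n \ge 1$ be natural numbers, and let $h_k(x) = x + \left\lfloor \frac{x}{k-1} \right\rfloor + 1$ for non-negative integers $x$, with $h_k^p$ denoting the $p$-th functional iterate of $h_k$ (so $h_k^0(0)=0$). Then there exists $p \in \mathbb{N}$ with $h_k^{p-1}(0) < n(k-1) \le h_k^{p}(0)$, and for this $p$ the last number remaining in the Josephus problem with the numbers $1,2,\dots,n$ in which every $k$-th number is removed is $nk - h_k^{p}(0)$.
   Context: Josephus problem: the numbers $1,2,\dots,n$ are arranged in a circle; starting the count at $1$ and proceeding around the circle, every $k$-th number still present is removed (after a removal, counting resumes with the next remaining number), until exactly one number remains. The claim asks to identify this remaining number. *)

theory Defs
  imports Main
begin

definition hk :: "nat \<Rightarrow> nat \<Rightarrow> nat" where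
  "hk k x = x + x div (k - 1) + 1"

text \<open>The circle is a list whose head is the number at which
  the count starts. One step: count k numbers (the k-th is at position (k-1) mod length),
  remove it, and resume counting at the next remaining number.\<close>
definition josephus_step :: "nat \<Rightarrow> nat list \<Rightarrow> nat list" where
  "josephus_step k xs = tl (rotate ((k - 1) mod length xs) xs)"

function josephus_run :: "nat \<Rightarrow> nat list \<Rightarrow> nat list" where
  "josephus_run k xs =
     (if length xs \<le> 1 then xs else josephus_run k (josephus_step k xs))"
  by auto
termination
  by (relation "measure (\<lambda>(k, xs). length xs)")
     (auto simp: josephus_step_def)

definition josephus :: "nat \<Rightarrow> nat \<Rightarrow> nat" where
  "josephus n k = hd (josephus_run k [1..<n + 1])"

end

theory Submission
  imports Defs
begin

fun jf :: "nat \<Rightarrow> nat \<Rightarrow> nat" where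
  "jf k 0 = 0"
| "jf k (Suc m) = (jf k m + k) mod (m + 2)"

lemma jf_less: "jf k m < Suc m" by (cases m) auto

lemma run_len: "length xs = Suc m \<Longrightarrow> k \<ge> 1 \<Longrightarrow> josephus_run k xs = [xs ! jf k m]"
proof (induction m arbitrary: xs)
  case 0
  then obtain a where "xs = [a]" by (cases xs) auto
  then show ?case by (subst josephus_run.simps) simp
next
  case (Suc m)
  define r where "r = (k - 1) mod (m + 2)"
  have r: "r < m + 2" unfolding r_def by simp
  define ys where "ys = josephus_step k xs"
  have ysl: "length ys = Suc m" using Suc.prems unfolding ys_def josephus_step_def by simp
  have ys_eq: "ys = tl (rotate r xs)" unfolding ys_def josephus_step_def r_def using Suc.prems by simp
  have run: "josephus_run k xs = josephus_run k ys"
    unfolding ys_def by (subst josephus_run.simps) (use Suc.prems in simp)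
  have jl: "jf k m < Suc m" by (cases m) auto
  have "ys ! jf k m = rotate r xs ! (jf k m + 1)"
    unfolding ys_eq using jl Suc.prems by (simp add: nth_tl)
  also have "\<dots> = xs ! ((jf k m + 1 + r) mod (m + 2))"
    using jl Suc.prems by (simp add: nth_rotate add_ac)
  also have "(jf k m + 1 + r) mod (m + 2) = (jf k m + k) mod (m + 2)"
  proof -
    have "(jf k m + 1 + r) mod (m + 2) = (jf k m + 1 + (k - 1)) mod (m + 2)"
      unfolding r_def by (rule mod_add_right_eq)
    also have "jf k m + 1 + (k - 1) = jf k m + k" using Suc.prems by simp
    finally show ?thesis .
  qed
  finally show ?case using run Suc.IH[OF ysl] Suc.prems by (simp add: add.commute)
qed

lemma josephus_jf: "n \<ge> 1 \<Longrightarrow> k \<ge> 1 \<Longrightarrow> josephus n k = jf k (n - 1) + 1"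
proof -
  assume n: "n \<ge> 1" and k: "k \<ge> 1"
  have "length [1..<n + 1] = Suc (n - 1)" using n by simp
  from run_len[OF this k] have "josephus n k = [1..<n + 1] ! jf k (n - 1)"
    unfolding josephus_def by simp
  moreover have "jf k (n - 1) < n" using n jf_less[of k "n - 1"] by simp
  ultimately show ?thesis by (simp del: upt_Suc add: nth_upt)
qed

abbreviation A :: "nat \<Rightarrow> nat \<Rightarrow> nat" where "A k j \<equiv> ((hk k) ^^ j) 0"

lemma A_Suc: "A k (Suc j) = hk k (A k j)" by simp

lemma A_smono: "strict_mono (A k)"
  unfolding strict_mono_Suc_iff by (simp add: hk_def)

lemma A_ge: "A k j \<ge> j"
  by (induction j) (auto simp: hk_def)

lemma hk_mono: "x \<le> y \<Longrightarrow> hk k x \<le> hk k y"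
  unfolding hk_def by (simp add: add_mono div_le_mono)

lemma exists_p:
  assumes "N \<ge> 1"
  shows "\<exists>p. A k (p - 1) < N \<and> N \<le> A k p"
proof -
  have ex: "\<exists>p. N \<le> A k p" using A_ge by blast
  define p where "p = (LEAST p. N \<le> A k p)"
  have p1: "N \<le> A k p" unfolding p_def by (rule LeastI_ex[OF ex])
  have "p \<noteq> 0" proof assume "p = 0" then show False using p1 assms by simp qed
  then have "\<not> N \<le> A k (p - 1)" unfolding p_def
    by (metis diff_less not_less_Least p_def zero_less_iff_neq_zero zero_less_one)
  then have "A k (p - 1) < N" by simp
  then show ?thesis using p1 by blast
qed

lemma p_pos: "A k (p - 1) < N \<Longrightarrow> N \<le> A k p \<Longrightarrow> p \<ge> 1"
  by (cases p) auto

lemma range_le: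
  assumes k: "k \<ge> 2" and h: "A k (p - 1) < n * (k - 1)" "n * (k - 1) \<le> A k p"
  shows "A k p \<le> n * k - 1"
proof -
  have p: "p = Suc (p - 1)" using p_pos[OF h] by simp
  have "A k p = hk k (A k (p - 1))" by (subst p) simp
  also have "\<dots> \<le> hk k (n * (k - 1) - 1)" using h(1) by (intro hk_mono) simp
  also have "\<dots> = n * k - 1"
  proof -
    have n: "n \<ge> 1" using h(1) by (cases n) auto
    have "(n * (k - 1) - 1) div (k - 1) = n - 1"
    proof (rule div_nat_eqI)
      show "(k - 1) * (n - 1) \<le> n * (k - 1) - 1" using n k
        by (simp add: algebra_simps diff_mult_distrib diff_mult_distrib2)
      have "n * (k - 1) \<ge> 1" using n k by simp
      then show "n * (k - 1) - 1 < (k - 1) * Suc (n - 1)" using n by (simp add: mult.commute)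
    qed
    moreover have "k * n \<ge> n + 1"
    proof -
      have "k * n \<ge> 2 * n" using k by simp
      then show ?thesis using n by linarith
    qed
    ultimately show ?thesis unfolding hk_def using n k
      by (simp add: algebra_simps diff_mult_distrib diff_mult_distrib2)
  qed
  finally show ?thesis .
qed

lemma p_unique:
  assumes "A k (p - 1) < N" "N \<le> A k p" "A k (q - 1) < N" "N \<le> A k q"
  shows "p = q"
proof -
  have "p \<ge> 1" "q \<ge> 1" using p_pos assms by blast+
  show ?thesis
  proof (rule ccontr)
    assume "p \<noteq> q"
    then consider "p \<le> q - 1" | "q \<le> p - 1" using \<open>p \<ge> 1\<close> \<open>q \<ge> 1\<close> by linarith
    then show False
    proof cases
      case 1 then have "A k p \<le> A k (q - 1)" using A_smono strict_mono_less_eq by blast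
      then show False using assms by simp
    next
      case 2 then have "A k q \<le> A k (p - 1)" using A_smono strict_mono_less_eq by blast
      then show False using assms by simp
    qed
  qed
qed

lemma iter_step:
  assumes k: "k \<ge> 2" and "n * (k - 1) \<le> A k p"
  shows "p \<le> j \<Longrightarrow> A k (j - 1) < (n + 1) * (k - 1) \<Longrightarrow> A k j = A k p + (j - p) * (n + 1)"
proof (induction j)
  case 0
  then show ?case by simp
next
  case (Suc j)
  show ?case
  proof (cases "p = Suc j")
    case True then show ?thesis by simp
  next
    case False
    then have pj: "p \<le> j" using Suc.prems by simp
    have lt: "A k j < (n + 1) * (k - 1)" using Suc.prems by simp
    have "A k p \<le> A k j" using strict_mono_less_eq[OF A_smono[of k]] pj by blast
    then have ge: "n * (k - 1) \<le> A k j" using assms(2) by linarith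
    have "A k (j - 1) \<le> A k j" using strict_mono_less_eq[OF A_smono[of k], of "j - 1" j] by simp
    then have jm: "A k (j - 1) < (n + 1) * (k - 1)" using lt by linarith
    have IH: "A k j = A k p + (j - p) * (n + 1)" using Suc.IH[OF pj jm] .
    have "A k j div (k - 1) = n"
      using lt ge k by (intro div_nat_eqI) (simp_all add: mult.commute)
    then have "A k (Suc j) = A k j + n + 1" by (simp add: hk_def)
    moreover obtain d where d: "j = p + d" using pj le_Suc_ex by blast
    moreover have "Suc j - p = Suc d" "j - p = d" using d by simp_all
    ultimately show ?thesis using IH by simp
  qed
qed

lemma main:
  assumes k: "k \<ge> 2"
  shows "n \<ge> 1 \<Longrightarrow> A k (p - 1) < n * (k - 1) \<Longrightarrow> n * (k - 1) \<le> A k p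
    \<Longrightarrow> jf k (n - 1) + 1 + A k p = n * k"
proof (induction n arbitrary: p rule: nat_induct_at_least)
  case base
  have "A k p \<le> 1 * k - 1" using range_le[OF k, of p 1] base by simp
  then show ?case using base k by simp
next
  case (Suc n)
  have N: "n * (k - 1) \<ge> 1" using Suc.hyps k by simp
  obtain q where q: "A k (q - 1) < n * (k - 1)" "n * (k - 1) \<le> A k q" using exists_p[OF N] by blast
  have IH: "jf k (n - 1) + 1 + A k q = n * k" using Suc.IH[OF q] .
  have qp: "q \<le> p"
  proof (rule ccontr)
    assume "\<not> q \<le> p"
    then have "p \<le> q - 1" by simp
    then have "A k p \<le> A k (q - 1)" using A_smono strict_mono_less_eq by blast
    moreover have "n * (k - 1) \<le> Suc n * (k - 1)" by simp
    ultimately show False using q(1) Suc.prems(2) by linarith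
  qed
  have eq: "A k p = A k q + (p - q) * (n + 1)"
  proof -
    have "A k (p - 1) < (n + 1) * (k - 1)" using Suc.prems by simp
    then show ?thesis using iter_step[OF k q(2) qp] by simp
  qed
  have rng1: "A k p \<le> Suc n * k - 1" using range_le[OF k Suc.prems] .
  have rng2: "Suc n * (k - 1) \<le> A k p" using Suc.prems by simp
  define x where "x = Suc n * k - A k p - 1"
  have xle: "x < n + 1"
  proof -
    have "Suc n * k \<ge> Suc n * 1" using k by (intro mult_le_mono2) simp
    then have "Suc n * (k - 1) + Suc n = Suc n * k" by (simp add: diff_mult_distrib2)
    then show ?thesis using rng1 rng2 unfolding x_def by linarith
  qed
  have "int x + int ((p - q) * (n + 1)) = int (jf k (n - 1)) + int k"
  proof -
    have "Suc n * k \<ge> 1" using k by simp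
    then have "A k p + 1 \<le> Suc n * k" using rng1 by linarith
    then have "int x = int (Suc n * k) - int (A k p) - 1" unfolding x_def
      by linarith
    moreover have "int (A k p) = int (A k q) + int ((p - q) * (n + 1))" using eq by simp
    moreover have "int (jf k (n - 1)) + 1 + int (A k q) = int (n * k)" using IH by linarith
    moreover have "int (Suc n * k) = int (n * k) + int k" by simp
    ultimately show ?thesis by linarith
  qed
  then have "x + (p - q) * (n + 1) = jf k (n - 1) + k" by linarith
  then have "(jf k (n - 1) + k) mod (n + 1) = x" using xle
    by (metis mod_less mod_mult_self1)
  moreover have "jf k (Suc n - 1) = (jf k (n - 1) + k) mod (n + 1)"
    using Suc.hyps by (cases n) auto
  ultimately have jx: "jf k (Suc n - 1) = x" by simp
  have "Suc n * k \<ge> 1" using k by simp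
  then have "A k p + 1 \<le> Suc n * k" using rng1 by linarith
  then show ?case using jx unfolding x_def by linarith
qed

theorem theorem3:
  fixes k n :: nat
  assumes "k \<ge> 2" and "n \<ge> 1"
  shows "(\<exists>p. ((hk k) ^^ (p - 1)) 0 < n * (k - 1) \<and> n * (k - 1) \<le> ((hk k) ^^ p) 0)
       \<and> (\<forall>p. ((hk k) ^^ (p - 1)) 0 < n * (k - 1) \<and> n * (k - 1) \<le> ((hk k) ^^ p) 0
              \<longrightarrow> int (josephus n k) = int (n * k) - int (((hk k) ^^ p) 0))"
proof
  have N: "n * (k - 1) \<ge> 1" using assms by simp
  show "\<exists>p. A k (p - 1) < n * (k - 1) \<and> n * (k - 1) \<le> A k p" using exists_p[OF N] .
  show "\<forall>p. A k (p - 1) < n * (k - 1) \<and> n * (k - 1) \<le> A k p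
              \<longrightarrow> int (josephus n k) = int (n * k) - int (A k p)"
  proof (intro allI impI)
    fix p assume h: "A k (p - 1) < n * (k - 1) \<and> n * (k - 1) \<le> A k p"
    have "jf k (n - 1) + 1 + A k p = n * k" using main[OF assms(1) assms(2) conjunct1[OF h] conjunct2[OF h]] .
    moreover have "josephus n k = jf k (n - 1) + 1" using josephus_jf[OF assms(2)] assms(1) by simp
    ultimately show "int (josephus n k) = int (n * k) - int (A k p)" by linarith
  qed
qed

end
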